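(* Let $d\ge0$ and let $a,b,c$ be nonnegative integers such that $s=a+b+c-d$ is positive. Then in $S_{\mathbb{Z}}(2,d)$ the following identities hold: $$f^{(a)}\binom{H_2}{b}e^{(c)}=\sum_{k=s}^{\min(a,c)}(-1)^{k-s}\binom{k-1}{s-1}\binom{b+k}{k}f^{(a-k)}\binom{H_2}{b+k}e^{(c-k)},$$ $$e^{(a)}\binom{H_1}{b}f^{(c)}=\sum_{k=s}^{\min(a,c)}(-1)^{k-s}\binom{k-1}{s-1}\binom{b+k}{k}e^{(a-k)}\binom{H_1}{b+k}f^{(c-k)}$$ (an empty sum being $0$).
   Context: Let $E=\mathbb{Q}^2$ with standard basis $e_1,e_2$, $E_{\mathbb{Z}}=\mathbb{Z}e_1\oplus\mathbb{Z}e_2$. Let $\rho_d:U(\mathfrak{gl}_2)\to\mathrm{End}_{\mathbb{Q}}(E^{\otimes d})$ be the representation in which $x\in\mathfrak{gl}_2$ acts as $\sum_{i=1}^d 1\otimes\cdots\otimes x\otimes\cdots\otimes 1$; its image is the Schur algebra $S_{\mathbb{Q}}(2,d)$. The integral Schur algebra $S_{\mathbb{Z}}(2,d)=\mathrm{End}_{\mathbb{Z}\Sigma_d}(E_{\mathbb{Z}}^{\otimes d})$ is regarded as a subring of $S_{\mathbb{Q}}(2,d)$. Write $e,f,H_1,H_2$ for the images under $\rho_d$ of the matrix units $e_{12},e_{21},e_{11},e_{22}$. For an element $T$ and integer $m\ge0$, $T^{(m)}=T^m/m!$ and $\binom{T}{m}=T(T-1)\cdots(T-m+1)/m!$; both are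 defined to be $0$ for negative $m$. *)

theory Defs
  imports Complex_Main
begin

text \<open>The tensor power E^{\<otimes>d} of E = Q^2 is modelled as the space of functions on
  words of length d over the alphabet {1,2}: the basis vector e_{w_1} \<otimes> ... \<otimes> e_{w_d}
  corresponds to the word w.  A vector is a function phi :: nat list => rat (only its values on
  words d matter) and an endomorphism is a map vec => vec.\<close>

type_synonym vec = "nat list \<Rightarrow> rat"
type_synonym endo = "vec \<Rightarrow> vec"

definition words :: "nat \<Rightarrow> nat list set" where
  "words d = {w. length w = d \<and> set w \<subseteq> {1, 2}}"

text \<open>rho d x: x a 2x2 rational matrix (entries x k l, k,l in {1,2}) acting on E^{\<otimes>d}
  as sum_i 1 \<otimes> ... \<otimes> x \<otimes> ... \<otimes> 1, written in coordinates.\<close>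
definition rho :: "nat \<Rightarrow> (nat \<Rightarrow> nat \<Rightarrow> rat) \<Rightarrow> endo" where
  "rho d x phi w = (\<Sum>i<d. \<Sum>j\<in>{1::nat, 2}. x (w ! i) j * phi (w[i := j]))"

definition matunit :: "nat \<Rightarrow> nat \<Rightarrow> nat \<Rightarrow> nat \<Rightarrow> rat" where
  "matunit i j = (\<lambda>k l. if k = i \<and> l = j then 1 else 0)"

definition e_op :: "nat \<Rightarrow> endo" where "e_op d = rho d (matunit 1 2)"
definition f_op :: "nat \<Rightarrow> endo" where "f_op d = rho d (matunit 2 1)"
definition H1_op :: "nat \<Rightarrow> endo" where "H1_op d = rho d (matunit 1 1)"
definition H2_op :: "nat \<Rightarrow> endo" where "H2_op d = rho d (matunit 2 2)"

definition divpow :: "endo \<Rightarrow> nat \<Rightarrow> endo" where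
  "divpow T m phi w = (T ^^ m) phi w / of_nat (fact m)"

fun fallprod :: "endo \<Rightarrow> nat \<Rightarrow> endo" where
  "fallprod T 0 = id"
| "fallprod T (Suc m) = (\<lambda>phi w. T (fallprod T m phi) w - of_nat m * fallprod T m phi w)"

definition binop :: "endo \<Rightarrow> nat \<Rightarrow> endo" where
  "binop T m phi w = fallprod T m phi w / of_nat (fact m)"

end

theory Submission
  imports Defs
begin

definition Wg :: "nat \<Rightarrow> nat \<Rightarrow> nat set \<Rightarrow> nat list" where
  "Wg d t X = map (\<lambda>i. if i \<in> X then t else 3 - t) [0..<d]"

lemma Wg_len[simp]: "length (Wg d t X) = d" by (simp add: Wg_def)
lemma Wg_nth[simp]: "i < d \<Longrightarrow> Wg d t X ! i = (if i \<in> X then t else 3 - t)"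
  by (simp add: Wg_def)

lemma Wg_upd_t: "t \<in> {1,2} \<Longrightarrow> i < d \<Longrightarrow> (Wg d t X)[i := t] = Wg d t (insert i X)"
  by (rule nth_equalityI) (auto simp: nth_list_update)

lemma Wg_upd_o: "t \<in> {1,2} \<Longrightarrow> i < d \<Longrightarrow> (Wg d t X)[i := 3 - t] = Wg d t (X - {i})"
  by (rule nth_equalityI) (auto simp: nth_list_update)

lemma words_Wg: "t \<in> {1,2} \<Longrightarrow> w \<in> words d \<Longrightarrow> w = Wg d t {i. i < d \<and> w ! i = t}"
  apply (rule nth_equalityI)
   apply (auto simp: words_def)
  using nth_mem by fastforce+

lemma rho_Wg:
  assumes t: "t \<in> {1,2}"
  shows "rho d x phi (Wg d t X) = (\<Sum>i<d. x (if i \<in> X then t else 3 - t) t * phi (Wg d t (insert i X))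
      + x (if i \<in> X then t else 3 - t) (3 - t) * phi (Wg d t (X - {i})))"
proof -
  have 12: "{1::nat,2} = {t, 3 - t}" "t \<noteq> 3 - t" using t by auto
  have "(\<Sum>j\<in>{1,2}. x k j * phi ((Wg d t X)[i := j])) = x k t * phi (Wg d t (insert i X))
      + x k (3 - t) * phi (Wg d t (X - {i}))" if "i < d" for i k
    unfolding 12(1) using 12(2) that by (simp add: Wg_upd_t[OF t] Wg_upd_o[OF t])
  then show ?thesis unfolding rho_def by (intro sum.cong) simp_all
qed

lemma U_Wg:
  assumes t: "t \<in> {1,2}"
  shows "rho d (matunit (3 - t) t) phi (Wg d t X) = (\<Sum>i<d. of_bool (i \<notin> X) * phi (Wg d t (insert i X)))"
  unfolding rho_Wg[OF t] by (rule sum.cong) (use t in \<open>auto simp: matunit_def\<close>)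

lemma D_Wg:
  assumes t: "t \<in> {1,2}"
  shows "rho d (matunit t (3 - t)) phi (Wg d t X) = (\<Sum>i<d. of_bool (i \<in> X) * phi (Wg d t (X - {i})))"
  unfolding rho_Wg[OF t] by (rule sum.cong) (use t in \<open>auto simp: matunit_def\<close>)

lemma H_Wg:
  assumes t: "t \<in> {1,2}" and X: "X \<subseteq> {..<d}"
  shows "rho d (matunit t t) phi (Wg d t X) = of_nat (card X) * phi (Wg d t X)"
proof -
  have "rho d (matunit t t) phi (Wg d t X) = (\<Sum>i<d. of_bool (i \<in> X) * phi (Wg d t X))"
    unfolding rho_Wg[OF t] by (rule sum.cong) (use t in \<open>auto simp: matunit_def insert_absorb\<close>)
  also have "\<dots> = of_nat (card X) * phi (Wg d t X)"
    using X by (simp add: Int_absorb1 Int_def[symmetric] Collect_mem_eq)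
  finally show ?thesis .
qed

lemma count_up:
  fixes d :: nat
  assumes X: "X \<subseteq> {..<d}" and Y: "Y \<subseteq> {..<d}"
  shows "card ({..<d} \<inter> {i. i \<notin> X \<and> insert i X \<subseteq> Y \<and> card (Y - insert i X) = c})
       = (if X \<subseteq> Y \<and> card (Y - X) = Suc c then Suc c else 0)"
proof -
  have fY: "finite Y" by (rule finite_subset[OF Y]) simp
  show ?thesis
  proof (cases "X \<subseteq> Y \<and> card (Y - X) = Suc c")
    case True
    have "{..<d} \<inter> {i. i \<notin> X \<and> insert i X \<subseteq> Y \<and> card (Y - insert i X) = c} = Y - X"
    proof (intro equalityI subsetI)
      fix i assume "i \<in> Y - X"
      then have e: "Y - insert i X = (Y - X) - {i}" by blast
      have "card (Y - insert i X) = c" unfolding e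
        using True \<open>i \<in> Y - X\<close> card_Diff_singleton[of i "Y - X"] by linarith
      moreover have "i < d" using \<open>i \<in> Y - X\<close> Y by auto
      ultimately show "i \<in> {..<d} \<inter> {i. i \<notin> X \<and> insert i X \<subseteq> Y \<and> card (Y - insert i X) = c}"
        using \<open>i \<in> Y - X\<close> True by blast
    qed blast
    then show ?thesis using True by simp
  next
    case False
    have "{..<d} \<inter> {i. i \<notin> X \<and> insert i X \<subseteq> Y \<and> card (Y - insert i X) = c} = {}"
    proof (rule ccontr)
      assume "\<not> ?thesis"
      then obtain i where i: "i \<notin> X" "insert i X \<subseteq> Y" "card (Y - insert i X) = c" by blast
      have e: "Y - X = insert i (Y - insert i X)" using i by blast
      have "card (Y - X) = Suc c" unfolding e using i fY
        by (intro trans[OF card_insert_disjoint]) auto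
      then show False using False i by blast
    qed
    then show ?thesis using False by simp
  qed
qed

lemma count_down:
  fixes d :: nat
  assumes X: "X \<subseteq> {..<d}" and Z: "Z \<subseteq> {..<d}"
  shows "card ({..<d} \<inter> {i. i \<in> X \<and> Z \<subseteq> X - {i} \<and> card (X - {i} - Z) = c})
       = (if Z \<subseteq> X \<and> card (X - Z) = Suc c then Suc c else 0)"
proof -
  have fX: "finite X" by (rule finite_subset[OF X]) simp
  show ?thesis
  proof (cases "Z \<subseteq> X \<and> card (X - Z) = Suc c")
    case True
    have "{..<d} \<inter> {i. i \<in> X \<and> Z \<subseteq> X - {i} \<and> card (X - {i} - Z) = c} = X - Z"
    proof (intro equalityI subsetI)
      fix i assume "i \<in> X - Z"
      then have e: "X - {i} - Z = (X - Z) - {i}" by blast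
      have "card (X - {i} - Z) = c" unfolding e
        using True \<open>i \<in> X - Z\<close> card_Diff_singleton[of i "X - Z"] by linarith
      moreover have "i < d" using \<open>i \<in> X - Z\<close> X by auto
      ultimately show "i \<in> {..<d} \<inter> {i. i \<in> X \<and> Z \<subseteq> X - {i} \<and> card (X - {i} - Z) = c}"
        using \<open>i \<in> X - Z\<close> True by blast
    qed blast
    then show ?thesis using True by simp
  next
    case False
    have "{..<d} \<inter> {i. i \<in> X \<and> Z \<subseteq> X - {i} \<and> card (X - {i} - Z) = c} = {}"
    proof (rule ccontr)
      assume "\<not> ?thesis"
      then obtain i where i: "i \<in> X" "Z \<subseteq> X - {i}" "card (X - {i} - Z) = c" by blast
      have e: "X - Z = insert i (X - {i} - Z)" using i by blast
      have "card (X - Z) = Suc c" unfolding e using i fX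
        by (intro trans[OF card_insert_disjoint]) auto
      then show False using False i by blast
    qed
    then show ?thesis using False by simp
  qed
qed

lemma Upow_Wg:
  assumes t: "t \<in> {1,2}"
  shows "X \<subseteq> {..<d} \<Longrightarrow> ((rho d (matunit (3 - t) t)) ^^ c) phi (Wg d t X)
    = fact c * (\<Sum>Y\<in>Pow {..<d}. of_bool (X \<subseteq> Y \<and> card (Y - X) = c) * phi (Wg d t Y))"
proof (induction c arbitrary: X)
  case 0
  have fX: "finite X" by (rule finite_subset[OF 0]) simp
  have "Pow {..<d} \<inter> {Y. X \<subseteq> Y \<and> card (Y - X) = 0} = {X}"
  proof (intro equalityI subsetI)
    fix Y assume Y: "Y \<in> Pow {..<d} \<inter> {Y. X \<subseteq> Y \<and> card (Y - X) = 0}"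
    then have "finite (Y - X)" by (meson IntD1 PowD finite_Diff finite_lessThan finite_subset)
    then have "Y - X = {}" using Y by simp
    then show "Y \<in> {X}" using Y by blast
  qed (use 0 in simp)
  then show ?case by simp
next
  case (Suc c)
  let ?U = "rho d (matunit (3 - t) t)"
  have "(?U ^^ Suc c) phi (Wg d t X) = ?U ((?U ^^ c) phi) (Wg d t X)" by simp
  also have "\<dots> = (\<Sum>i<d. of_bool (i \<notin> X) * (fact c *
      (\<Sum>Y\<in>Pow {..<d}. of_bool (insert i X \<subseteq> Y \<and> card (Y - insert i X) = c) * phi (Wg d t Y))))"
    unfolding U_Wg[OF t] proof (intro sum.cong refl)
    fix i assume "i \<in> {..<d}"
    then have "insert i X \<subseteq> {..<d}" using Suc.prems by blast
    note ih = Suc.IH[OF this]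
    show "of_bool (i \<notin> X) * (?U ^^ c) phi (Wg d t (insert i X)) = of_bool (i \<notin> X) * (fact c *
      (\<Sum>Y\<in>Pow {..<d}. of_bool (insert i X \<subseteq> Y \<and> card (Y - insert i X) = c) * phi (Wg d t Y)))"
      by (simp only: ih)
  qed
  also have "\<dots> = fact c * (\<Sum>Y\<in>Pow {..<d}. (\<Sum>i<d. of_bool (i \<notin> X \<and> insert i X \<subseteq> Y \<and> card (Y - insert i X) = c)) * phi (Wg d t Y))"
  proof -
    have "\<And>i Y. of_bool (i \<notin> X) * (fact c * (of_bool (insert i X \<subseteq> Y \<and> card (Y - insert i X) = c) * phi (Wg d t Y)))
        = fact c * (of_bool (i \<notin> X \<and> insert i X \<subseteq> Y \<and> card (Y - insert i X) = c) * phi (Wg d t Y))" by simp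
    then have "(\<Sum>i<d. of_bool (i \<notin> X) * (fact c * (\<Sum>Y\<in>Pow {..<d}. of_bool (insert i X \<subseteq> Y \<and> card (Y - insert i X) = c) * phi (Wg d t Y))))
      = (\<Sum>i<d. \<Sum>Y\<in>Pow {..<d}. fact c * (of_bool (i \<notin> X \<and> insert i X \<subseteq> Y \<and> card (Y - insert i X) = c) * phi (Wg d t Y)))"
      by (simp only: sum_distrib_left)
    also have "\<dots> = (\<Sum>Y\<in>Pow {..<d}. \<Sum>i<d. fact c * (of_bool (i \<notin> X \<and> insert i X \<subseteq> Y \<and> card (Y - insert i X) = c) * phi (Wg d t Y)))"
      by (rule sum.swap)
    also have "\<dots> = fact c * (\<Sum>Y\<in>Pow {..<d}. (\<Sum>i<d. of_bool (i \<notin> X \<and> insert i X \<subseteq> Y \<and> card (Y - insert i X) = c)) * phi (Wg d t Y))"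
      by (simp only: sum_distrib_left sum_distrib_right)
    finally show ?thesis .
  qed
  also have "\<dots> = fact c * (\<Sum>Y\<in>Pow {..<d}. (of_nat (Suc c) * of_bool (X \<subseteq> Y \<and> card (Y - X) = Suc c)) * phi (Wg d t Y))"
  proof -
    have cnt: "(\<Sum>i<d. of_bool (i \<notin> X \<and> insert i X \<subseteq> Y \<and> card (Y - insert i X) = c))
        = (of_nat (Suc c) * of_bool (X \<subseteq> Y \<and> card (Y - X) = Suc c) :: rat)" if "Y \<in> Pow {..<d}" for Y
    proof -
      have "(\<Sum>i<d. of_bool (i \<notin> X \<and> insert i X \<subseteq> Y \<and> card (Y - insert i X) = c))
          = (of_nat (card ({..<d} \<inter> {i. i \<notin> X \<and> insert i X \<subseteq> Y \<and> card (Y - insert i X) = c})) :: rat)"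
        by (intro sum_of_bool_eq) auto
      also have "\<dots> = of_nat (if X \<subseteq> Y \<and> card (Y - X) = Suc c then Suc c else 0)"
        using count_up[OF Suc.prems, of Y c] that by simp
      finally show ?thesis by simp
    qed
    show ?thesis by (simp only: cnt cong: sum.cong)
  qed
  also have "\<dots> = fact (Suc c) * (\<Sum>Y\<in>Pow {..<d}. of_bool (X \<subseteq> Y \<and> card (Y - X) = Suc c) * phi (Wg d t Y))"
    by (simp only: sum_distrib_left fact_Suc mult_ac)
  finally show ?case .
qed

lemma Dpow_Wg:
  assumes t: "t \<in> {1,2}"
  shows "X \<subseteq> {..<d} \<Longrightarrow> ((rho d (matunit t (3 - t))) ^^ c) phi (Wg d t X)
    = fact c * (\<Sum>Z\<in>Pow {..<d}. of_bool (Z \<subseteq> X \<and> card (X - Z) = c) * phi (Wg d t Z))"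
proof (induction c arbitrary: X)
  case 0
  have fX: "finite X" by (rule finite_subset[OF 0]) simp
  have "Pow {..<d} \<inter> {Z. Z \<subseteq> X \<and> card (X - Z) = 0} = {X}"
  proof (intro equalityI subsetI)
    fix Z assume Z: "Z \<in> Pow {..<d} \<inter> {Z. Z \<subseteq> X \<and> card (X - Z) = 0}"
    then have "X - Z = {}" using fX by simp
    then show "Z \<in> {X}" using Z by blast
  qed (use 0 in simp)
  then show ?case by simp
next
  case (Suc c)
  let ?U = "rho d (matunit t (3 - t))"
  have "(?U ^^ Suc c) phi (Wg d t X) = ?U ((?U ^^ c) phi) (Wg d t X)" by simp
  also have "\<dots> = (\<Sum>i<d. of_bool (i \<in> X) * (fact c *
      (\<Sum>Z\<in>Pow {..<d}. of_bool (Z \<subseteq> X - {i} \<and> card (X - {i} - Z) = c) * phi (Wg d t Z))))"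
    unfolding D_Wg[OF t] proof (intro sum.cong refl)
    fix i assume "i \<in> {..<d}"
    have "X - {i} \<subseteq> {..<d}" using Suc.prems by blast
    note ih = Suc.IH[OF this]
    show "of_bool (i \<in> X) * (?U ^^ c) phi (Wg d t (X - {i})) = of_bool (i \<in> X) * (fact c *
      (\<Sum>Z\<in>Pow {..<d}. of_bool (Z \<subseteq> X - {i} \<and> card (X - {i} - Z) = c) * phi (Wg d t Z)))"
      by (simp only: ih)
  qed
  also have "\<dots> = fact c * (\<Sum>Z\<in>Pow {..<d}. (\<Sum>i<d. of_bool (i \<in> X \<and> Z \<subseteq> X - {i} \<and> card (X - {i} - Z) = c)) * phi (Wg d t Z))"
  proof -
    have "\<And>i Z. of_bool (i \<in> X) * (fact c * (of_bool (Z \<subseteq> X - {i} \<and> card (X - {i} - Z) = c) * phi (Wg d t Z)))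
        = fact c * (of_bool (i \<in> X \<and> Z \<subseteq> X - {i} \<and> card (X - {i} - Z) = c) * phi (Wg d t Z))" by simp
    then have "(\<Sum>i<d. of_bool (i \<in> X) * (fact c * (\<Sum>Z\<in>Pow {..<d}. of_bool (Z \<subseteq> X - {i} \<and> card (X - {i} - Z) = c) * phi (Wg d t Z))))
      = (\<Sum>i<d. \<Sum>Z\<in>Pow {..<d}. fact c * (of_bool (i \<in> X \<and> Z \<subseteq> X - {i} \<and> card (X - {i} - Z) = c) * phi (Wg d t Z)))"
      by (simp only: sum_distrib_left)
    also have "\<dots> = (\<Sum>Z\<in>Pow {..<d}. \<Sum>i<d. fact c * (of_bool (i \<in> X \<and> Z \<subseteq> X - {i} \<and> card (X - {i} - Z) = c) * phi (Wg d t Z)))"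
      by (rule sum.swap)
    also have "\<dots> = fact c * (\<Sum>Z\<in>Pow {..<d}. (\<Sum>i<d. of_bool (i \<in> X \<and> Z \<subseteq> X - {i} \<and> card (X - {i} - Z) = c)) * phi (Wg d t Z))"
      by (simp only: sum_distrib_left sum_distrib_right)
    finally show ?thesis .
  qed
  also have "\<dots> = fact c * (\<Sum>Z\<in>Pow {..<d}. (of_nat (Suc c) * of_bool (Z \<subseteq> X \<and> card (X - Z) = Suc c)) * phi (Wg d t Z))"
  proof -
    have cnt: "(\<Sum>i<d. of_bool (i \<in> X \<and> Z \<subseteq> X - {i} \<and> card (X - {i} - Z) = c))
        = (of_nat (Suc c) * of_bool (Z \<subseteq> X \<and> card (X - Z) = Suc c) :: rat)" if "Z \<in> Pow {..<d}" for Z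
    proof -
      have "(\<Sum>i<d. of_bool (i \<in> X \<and> Z \<subseteq> X - {i} \<and> card (X - {i} - Z) = c))
          = (of_nat (card ({..<d} \<inter> {i. i \<in> X \<and> Z \<subseteq> X - {i} \<and> card (X - {i} - Z) = c})) :: rat)"
        by (intro sum_of_bool_eq) auto
      also have "\<dots> = of_nat (if Z \<subseteq> X \<and> card (X - Z) = Suc c then Suc c else 0)"
        using count_down[OF Suc.prems, of Z c] that by simp
      finally show ?thesis by simp
    qed
    show ?thesis by (simp only: cnt cong: sum.cong)
  qed
  also have "\<dots> = fact (Suc c) * (\<Sum>Z\<in>Pow {..<d}. of_bool (Z \<subseteq> X \<and> card (X - Z) = Suc c) * phi (Wg d t Z))"
    by (simp only: sum_distrib_left fact_Suc mult_ac)
  finally show ?case .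
qed

lemma fall_Wg:
  assumes t: "t \<in> {1,2}" and X: "X \<subseteq> {..<d}"
  shows "fallprod (rho d (matunit t t)) m phi (Wg d t X)
       = (\<Prod>j<m. (of_nat (card X) - of_nat j)) * phi (Wg d t X)"
proof (induction m)
  case 0
  then show ?case by simp
next
  case (Suc m)
  have "fallprod (rho d (matunit t t)) (Suc m) phi (Wg d t X)
      = of_nat (card X) * fallprod (rho d (matunit t t)) m phi (Wg d t X)
        - of_nat m * fallprod (rho d (matunit t t)) m phi (Wg d t X)"
    by (simp add: H_Wg[OF t X])
  also have "\<dots> = (of_nat (card X) - of_nat m) * fallprod (rho d (matunit t t)) m phi (Wg d t X)"
    by (simp add: algebra_simps)
  finally show ?case using Suc by (simp add: mult_ac)
qed

lemma binop_Wg: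
  assumes t: "t \<in> {1,2}" and X: "X \<subseteq> {..<d}"
  shows "binop (rho d (matunit t t)) m phi (Wg d t X) = of_nat (card X choose m) * phi (Wg d t X)"
proof -
  have "of_nat (card X choose m) = (of_nat (card X) gchoose m :: rat)"
    by (rule binomial_gbinomial)
  also have "\<dots> = (\<Prod>j<m. (of_nat (card X) - of_nat j)) / fact m"
    by (simp add: gbinomial_prod_rev atLeast0LessThan)
  finally show ?thesis unfolding binop_def fall_Wg[OF t X] by simp
qed

definition Gc :: "nat \<Rightarrow> nat \<Rightarrow> nat \<Rightarrow> nat \<Rightarrow> nat set \<Rightarrow> nat set \<Rightarrow> rat" where
  "Gc d a b c X Y = (\<Sum>Z\<in>Pow {..<d}. of_bool (Z \<subseteq> X \<and> card (X - Z) = a)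
      * of_nat (card Z choose b) * of_bool (Z \<subseteq> Y \<and> card (Y - Z) = c))"

lemma comp_Wg:
  assumes t: "t \<in> {1,2}" and X: "X \<subseteq> {..<d}"
  shows "(divpow (rho d (matunit t (3 - t))) a \<circ> binop (rho d (matunit t t)) b
          \<circ> divpow (rho d (matunit (3 - t) t)) c) phi (Wg d t X)
       = (\<Sum>Y\<in>Pow {..<d}. Gc d a b c X Y * phi (Wg d t Y))"
proof -
  let ?D = "rho d (matunit t (3 - t))" and ?H = "rho d (matunit t t)" and ?U = "rho d (matunit (3 - t) t)"
  define psi where "psi = binop ?H b (divpow ?U c phi)"
  have psi: "psi (Wg d t Z) = of_nat (card Z choose b) *
      (\<Sum>Y\<in>Pow {..<d}. of_bool (Z \<subseteq> Y \<and> card (Y - Z) = c) * phi (Wg d t Y))"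
    if "Z \<in> Pow {..<d}" for Z
  proof -
    have Z: "Z \<subseteq> {..<d}" using that by simp
    have "psi (Wg d t Z) = of_nat (card Z choose b) * divpow ?U c phi (Wg d t Z)"
      unfolding psi_def by (rule binop_Wg[OF t Z])
    also have "divpow ?U c phi (Wg d t Z) = (\<Sum>Y\<in>Pow {..<d}. of_bool (Z \<subseteq> Y \<and> card (Y - Z) = c) * phi (Wg d t Y))"
      unfolding divpow_def Upow_Wg[OF t Z] by simp
    finally show ?thesis .
  qed
  have "(divpow ?D a \<circ> binop ?H b \<circ> divpow ?U c) phi (Wg d t X) = divpow ?D a psi (Wg d t X)"
    by (simp add: psi_def)
  also have "\<dots> = (\<Sum>Z\<in>Pow {..<d}. of_bool (Z \<subseteq> X \<and> card (X - Z) = a) * psi (Wg d t Z))"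
    unfolding divpow_def Dpow_Wg[OF t X] by simp
  also have "\<dots> = (\<Sum>Z\<in>Pow {..<d}. \<Sum>Y\<in>Pow {..<d}. (of_bool (Z \<subseteq> X \<and> card (X - Z) = a)
      * of_nat (card Z choose b) * of_bool (Z \<subseteq> Y \<and> card (Y - Z) = c)) * phi (Wg d t Y))"
    by (intro sum.cong refl) (simp only: psi sum_distrib_left mult_ac)
  also have "\<dots> = (\<Sum>Y\<in>Pow {..<d}. \<Sum>Z\<in>Pow {..<d}. (of_bool (Z \<subseteq> X \<and> card (X - Z) = a)
      * of_nat (card Z choose b) * of_bool (Z \<subseteq> Y \<and> card (Y - Z) = c)) * phi (Wg d t Y))"
    by (rule sum.swap)
  also have "\<dots> = (\<Sum>Y\<in>Pow {..<d}. Gc d a b c X Y * phi (Wg d t Y))"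
    unfolding Gc_def by (simp only: sum_distrib_right)
  finally show ?thesis .
qed

lemma Gc_formula:
  fixes d :: nat
  assumes X: "X \<subseteq> {..<d}" and Y: "Y \<subseteq> {..<d}"
  shows "Gc d a b c X Y = of_bool (a \<le> card X \<and> c \<le> card Y \<and> card X - a = card Y - c)
     * of_nat (card (X \<inter> Y) choose (card X - a)) * of_nat ((card X - a) choose b)"
proof -
  have fX: "finite X" by (rule finite_subset[OF X]) simp
  have fY: "finite Y" by (rule finite_subset[OF Y]) simp
  let ?P = "\<lambda>Z. Z \<subseteq> X \<and> card (X - Z) = a \<and> Z \<subseteq> Y \<and> card (Y - Z) = c"
  have "Gc d a b c X Y = (\<Sum>Z\<in>Pow {..<d}. of_bool (?P Z) * of_nat (card Z choose b))"
    unfolding Gc_def by (intro sum.cong refl) auto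
  also have "\<dots> = (\<Sum>Z\<in>Pow {..<d} \<inter> {Z. ?P Z}. of_nat (card Z choose b))"
    by (rule sum_of_bool_mult_eq) simp
  finally have G: "Gc d a b c X Y = (\<Sum>Z\<in>Pow {..<d} \<inter> {Z. ?P Z}. of_nat (card Z choose b))" .
  have cd: "card (X - Z) = card X - card Z" "card (Y - Z) = card Y - card Z" if "Z \<subseteq> X \<inter> Y" for Z
    using that fX fY by (auto intro!: card_Diff_subset finite_subset[of Z X])
  have le: "card Z \<le> card X" "card Z \<le> card Y" if "Z \<subseteq> X \<inter> Y" for Z
    using that fX fY by (auto intro!: card_mono)
  show ?thesis
  proof (cases "a \<le> card X \<and> c \<le> card Y \<and> card X - a = card Y - c")
    case True
    let ?m = "card X - a"
    have S: "Pow {..<d} \<inter> {Z. ?P Z} = {Z. Z \<subseteq> X \<inter> Y \<and> card Z = ?m}"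
    proof (intro equalityI subsetI)
      fix Z assume "Z \<in> Pow {..<d} \<inter> {Z. ?P Z}"
      then have Z: "Z \<subseteq> X \<inter> Y" "card (X - Z) = a" by auto
      then show "Z \<in> {Z. Z \<subseteq> X \<inter> Y \<and> card Z = ?m}" using cd[OF Z(1)] le[OF Z(1)] by auto
    next
      fix Z assume "Z \<in> {Z. Z \<subseteq> X \<inter> Y \<and> card Z = ?m}"
      then have Z: "Z \<subseteq> X \<inter> Y" "card Z = ?m" by auto
      then show "Z \<in> Pow {..<d} \<inter> {Z. ?P Z}" using cd[OF Z(1)] True X by auto
    qed
    have "Gc d a b c X Y = (\<Sum>Z\<in>{Z. Z \<subseteq> X \<inter> Y \<and> card Z = ?m}. of_nat (?m choose b))"
      unfolding G S by (intro sum.cong refl) simp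
    also have "\<dots> = of_nat (card {Z. Z \<subseteq> X \<inter> Y \<and> card Z = ?m}) * of_nat (?m choose b)"
      by simp
    also have "card {Z. Z \<subseteq> X \<inter> Y \<and> card Z = ?m} = card (X \<inter> Y) choose ?m"
      by (rule n_subsets) (use fX in simp)
    finally show ?thesis using True by simp
  next
    case False
    have "Pow {..<d} \<inter> {Z. ?P Z} = {}"
    proof (rule ccontr)
      assume "\<not> ?thesis"
      then obtain Z where Z: "?P Z" by blast
      then have Z1: "Z \<subseteq> X \<inter> Y" by blast
      show False using Z cd[OF Z1] le[OF Z1] False by auto
    qed
    then show ?thesis unfolding G using False by simp
  qed
qed

lemma orth:
  "(\<Sum>j\<le>n. (-1::rat)^(j - t) * of_nat (n choose j) * of_nat (j choose t)) = of_bool (n = t)"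
proof (cases "t \<le> n")
  case False
  then show ?thesis by (intro trans[OF sum.neutral]) (auto simp: binomial_eq_0)
next
  case True
  have "(\<Sum>j\<le>n. (-1::rat)^(j - t) * of_nat (n choose j) * of_nat (j choose t))
      = (\<Sum>j\<in>{t..n}. (-1::rat)^(j - t) * of_nat (n choose j) * of_nat (j choose t))"
    by (rule sum.mono_neutral_right) (auto simp: binomial_eq_0)
  also have "{t..n} = {0 + t..(n - t) + t}" using True by simp
  also have "(\<Sum>j\<in>{0 + t..(n - t) + t}. (-1::rat)^(j - t) * of_nat (n choose j) * of_nat (j choose t))
      = (\<Sum>i\<in>{0..n - t}. (-1::rat)^(i + t - t) * of_nat (n choose (i + t)) * of_nat ((i + t) choose t))"
    by (rule sum.shift_bounds_cl_nat_ivl)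
  also have "\<dots> = (\<Sum>i\<in>{0..n - t}. of_nat (n choose t) * ((-1::rat)^i * of_nat ((n - t) choose i)))"
  proof (intro sum.cong refl)
    fix i assume "i \<in> {0..n - t}"
    then have "(n choose (i + t)) * ((i + t) choose t) = (n choose t) * ((n - t) choose i)"
      using choose_mult[of t "i + t" n] True by simp
    then have "(of_nat (n choose (i + t)) * of_nat ((i + t) choose t) :: rat) = of_nat (n choose t) * of_nat ((n - t) choose i)"
      by (metis of_nat_mult)
    then show "(-1::rat)^(i + t - t) * of_nat (n choose (i + t)) * of_nat ((i + t) choose t)
        = of_nat (n choose t) * ((-1::rat)^i * of_nat ((n - t) choose i))"
      by (simp add: mult_ac)
  qed
  also have "\<dots> = of_nat (n choose t) * (\<Sum>i\<le>n - t. (-1::rat)^i * of_nat ((n - t) choose i))"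
    by (simp add: sum_distrib_left atLeast0AtMost)
  also have "\<dots> = of_bool (n = t)"
  proof (cases "n = t")
    case True then show ?thesis by simp
  next
    case False
    then have "n - t > 0" using \<open>t \<le> n\<close> by simp
    then show ?thesis using False by (simp add: choose_alternating_sum)
  qed
  finally show ?thesis .
qed

lemma Bsum:
  "(\<Sum>j<n. (-1::rat)^(j - t) * of_nat (j choose t) * of_nat (n choose Suc j)) = of_bool (t < n)"
proof (induction n)
  case 0
  then show ?case by simp
next
  case (Suc n)
  have "(\<Sum>j<Suc n. (-1::rat)^(j - t) * of_nat (j choose t) * of_nat (Suc n choose Suc j))
      = (\<Sum>j<Suc n. (-1::rat)^(j - t) * of_nat (n choose j) * of_nat (j choose t))
        + (\<Sum>j<Suc n. (-1::rat)^(j - t) * of_nat (j choose t) * of_nat (n choose Suc j))"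
    by (simp add: sum.distrib[symmetric] algebra_simps)
  also have "(\<Sum>j<Suc n. (-1::rat)^(j - t) * of_nat (n choose j) * of_nat (j choose t)) = of_bool (n = t)"
    unfolding lessThan_Suc_atMost by (rule orth)
  also have "(\<Sum>j<Suc n. (-1::rat)^(j - t) * of_nat (j choose t) * of_nat (n choose Suc j)) = of_bool (t < n)"
    using Suc.IH by simp
  finally show ?case by auto
qed

lemma alt_sum:
  assumes "1 \<le> s" "s \<le> n"
  shows "(\<Sum>k\<in>{s..n}. (-1::rat)^(k - s) * of_nat ((k - 1) choose (s - 1)) * of_nat (n choose k)) = 1"
proof -
  define t where "t = s - 1"
  define m where "m = n - 1"
  have st: "s = t + 1" and nm: "n = m + 1" using assms by (auto simp: t_def m_def)
  have "(\<Sum>k\<in>{s..n}. (-1::rat)^(k - s) * of_nat ((k - 1) choose (s - 1)) * of_nat (n choose k))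
      = (\<Sum>k\<in>{t + 1..m + 1}. (-1::rat)^(k - (t + 1)) * of_nat ((k - 1) choose t) * of_nat ((m + 1) choose k))"
    unfolding st nm by simp
  also have "\<dots> = (\<Sum>j\<in>{t..m}. (-1::rat)^(j + 1 - (t + 1)) * of_nat ((j + 1 - 1) choose t) * of_nat ((m + 1) choose (j + 1)))"
    by (rule sum.shift_bounds_cl_nat_ivl)
  also have "\<dots> = (\<Sum>j\<in>{t..m}. (-1::rat)^(j - t) * of_nat (j choose t) * of_nat (n choose Suc j))"
    unfolding nm by simp
  also have "\<dots> = (\<Sum>j<n. (-1::rat)^(j - t) * of_nat (j choose t) * of_nat (n choose Suc j))"
    by (rule sum.mono_neutral_left) (auto simp: nm binomial_eq_0)
  also have "t < n" using st nm assms by simp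
  then have "(\<Sum>j<n. (-1::rat)^(j - t) * of_nat (j choose t) * of_nat (n choose Suc j)) = 1"
    using Bsum[where n=n and t=t] by simp
  finally show ?thesis .
qed

lemma KI:
  fixes b k m r :: nat
  shows "((b + k) choose k) * (r choose (m + k)) * ((m + k) choose (b + k))
       = (r choose m) * (m choose b) * ((r - m) choose k)"
proof (cases "b \<le> m \<and> m + k \<le> r")
  case True
  have 1: "(r choose (m + k)) * ((m + k) choose m) = (r choose m) * ((r - m) choose k)"
    using choose_mult[of m "m + k" r] True by simp
  have 2: "((m + k) choose (b + k)) * ((b + k) choose k) = ((m + k) choose k) * (m choose b)"
    using choose_mult[of k "b + k" "m + k"] True by simp
  have 3: "(m + k) choose k = (m + k) choose m"
    using binomial_symmetric[of k "m + k"] by simp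
  have "((b + k) choose k) * (r choose (m + k)) * ((m + k) choose (b + k))
      = (r choose (m + k)) * (((m + k) choose (b + k)) * ((b + k) choose k))" by (simp add: mult_ac)
  also have "\<dots> = ((r choose (m + k)) * ((m + k) choose m)) * (m choose b)" unfolding 2 3 by (simp add: mult_ac)
  also have "\<dots> = (r choose m) * (m choose b) * ((r - m) choose k)" unfolding 1 by (simp add: mult_ac)
  finally show ?thesis .
next
  case False
  then consider "m < b" | "r < m + k" by linarith
  then show ?thesis
  proof cases
    case 1 then show ?thesis by (simp add: binomial_eq_0)
  next
    case 2
    then have "r < m \<or> r - m < k" by linarith
    then show ?thesis using 2 by (auto simp: binomial_eq_0)
  qed
qed

lemma scalar:
  fixes \<alpha> \<beta> r a b c d :: nat
  assumes r1: "r \<le> \<alpha>" and r2: "r \<le> \<beta>" and un: "\<alpha> + \<beta> \<le> d + r" and dl: "d < a + b + c"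
  defines "s \<equiv> a + b + c - d"
  shows "(of_bool (a \<le> \<alpha> \<and> c \<le> \<beta> \<and> \<alpha> - a = \<beta> - c) * of_nat (r choose (\<alpha> - a)) * of_nat ((\<alpha> - a) choose b) :: rat)
   = (\<Sum>k\<in>{s..min a c}. (-1)^(k - s) * of_nat ((k - 1) choose (s - 1)) * of_nat ((b + k) choose k) *
        (of_bool (a - k \<le> \<alpha> \<and> c - k \<le> \<beta> \<and> \<alpha> - (a - k) = \<beta> - (c - k))
         * of_nat (r choose (\<alpha> - (a - k))) * of_nat ((\<alpha> - (a - k)) choose (b + k))))" (is "?L = ?R")
proof -
  have s1: "1 \<le> s" using dl by (simp add: s_def)
  consider "\<alpha> + c \<noteq> \<beta> + a" | "\<alpha> + c = \<beta> + a" "\<alpha> < a" | "\<alpha> + c = \<beta> + a" "a \<le> \<alpha>" by linarith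
  then show ?thesis
  proof cases
    case 1
    have "\<not> (a - k \<le> \<alpha> \<and> c - k \<le> \<beta> \<and> \<alpha> - (a - k) = \<beta> - (c - k))" if "k \<in> {s..min a c}" for k
      using that 1 by auto
    then have R: "?R = 0" by (intro sum.neutral ballI) simp
    have "\<not> (a \<le> \<alpha> \<and> c \<le> \<beta> \<and> \<alpha> - a = \<beta> - c)" using 1 by auto
    then have "?L = 0" by simp
    then show ?thesis using R by simp
  next
    case 2
    have "(\<alpha> - (a - k)) choose (b + k) = 0" if "k \<in> {s..min a c}" for k
      using that 2 s1 by (intro binomial_eq_0) auto
    then have R: "?R = 0" by (intro sum.neutral ballI) (simp only: of_nat_0 mult_zero_right)
    have "?L = 0" using 2 by simp
    then show ?thesis using R by simp
  next
    case 3
    define m where "m = \<alpha> - a"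
    have al: "\<alpha> = a + m" and be: "\<beta> = c + m" using 3 by (auto simp: m_def)
    have tm: "(-1)^(k - s) * of_nat ((k - 1) choose (s - 1)) * of_nat ((b + k) choose k) *
        (of_bool (a - k \<le> \<alpha> \<and> c - k \<le> \<beta> \<and> \<alpha> - (a - k) = \<beta> - (c - k))
         * of_nat (r choose (\<alpha> - (a - k))) * of_nat ((\<alpha> - (a - k)) choose (b + k)))
       = of_nat (r choose m) * of_nat (m choose b) * ((-1::rat)^(k - s) * of_nat ((k - 1) choose (s - 1)) * of_nat ((r - m) choose k))"
      if "k \<in> {s..min a c}" for k
    proof -
      have k: "k \<le> a" "k \<le> c" using that by auto
      have e: "\<alpha> - (a - k) = m + k" using k al by simp
      have ind: "a - k \<le> \<alpha> \<and> c - k \<le> \<beta> \<and> \<alpha> - (a - k) = \<beta> - (c - k)" using k al be by auto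
      have "(of_nat ((b + k) choose k) * of_nat (r choose (m + k)) * of_nat ((m + k) choose (b + k)) :: rat)
          = of_nat (r choose m) * of_nat (m choose b) * of_nat ((r - m) choose k)"
        using KI[of b k r m] by (metis of_nat_mult)
      moreover have ind1: "(of_bool (a - k \<le> \<alpha> \<and> c - k \<le> \<beta> \<and> \<alpha> - (a - k) = \<beta> - (c - k)) :: rat) = 1"
        using ind by simp
      ultimately show ?thesis unfolding ind1 e by (simp add: mult_ac)
    qed
    have lhs: "(of_bool (a \<le> \<alpha> \<and> c \<le> \<beta> \<and> \<alpha> - a = \<beta> - c) * of_nat (r choose (\<alpha> - a)) * of_nat ((\<alpha> - a) choose b) :: rat)
        = of_nat (r choose m) * of_nat (m choose b)"
    proof -
      have ind0: "(of_bool (a \<le> \<alpha> \<and> c \<le> \<beta> \<and> \<alpha> - a = \<beta> - c) :: rat) = 1"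
        using al be by simp
      have "(of_bool (a \<le> \<alpha> \<and> c \<le> \<beta> \<and> \<alpha> - a = \<beta> - c) * of_nat (r choose (\<alpha> - a)) * of_nat ((\<alpha> - a) choose b) :: rat)
        = of_bool (a \<le> \<alpha> \<and> c \<le> \<beta> \<and> \<alpha> - a = \<beta> - c) * of_nat (r choose m) * of_nat (m choose b)"
        by (simp only: m_def)
      also have "\<dots> = of_nat (r choose m) * of_nat (m choose b)"
        by (simp only: ind0 mult_1_left)
      finally show ?thesis .
    qed
    have rhs: "(\<Sum>k\<in>{s..min a c}. (-1)^(k - s) * of_nat ((k - 1) choose (s - 1)) * of_nat ((b + k) choose k) *
        (of_bool (a - k \<le> \<alpha> \<and> c - k \<le> \<beta> \<and> \<alpha> - (a - k) = \<beta> - (c - k))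
         * of_nat (r choose (\<alpha> - (a - k))) * of_nat ((\<alpha> - (a - k)) choose (b + k))))
      = of_nat (r choose m) * of_nat (m choose b) * (\<Sum>k\<in>{s..min a c}. (-1::rat)^(k - s) * of_nat ((k - 1) choose (s - 1)) * of_nat ((r - m) choose k))"
      by (simp only: sum_distrib_left tm cong: sum.cong)
    show ?thesis
    proof (cases "m \<le> r \<and> b \<le> m")
      case False
      then have "(r choose m) * (m choose b) = 0" by (auto simp: binomial_eq_0)
      then show ?thesis unfolding lhs rhs by simp
    next
      case True
      define n where "n = r - m"
      have n1: "n \<le> min a c" unfolding n_def using r1 r2 al be by arith
      have n2: "s \<le> n" unfolding s_def n_def using un True al be by arith
      have "(\<Sum>k\<in>{s..min a c}. (-1::rat)^(k - s) * of_nat ((k - 1) choose (s - 1)) * of_nat (n choose k))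
          = (\<Sum>k\<in>{s..n}. (-1::rat)^(k - s) * of_nat ((k - 1) choose (s - 1)) * of_nat (n choose k))"
        by (rule sum.mono_neutral_right) (use n1 in \<open>auto simp: binomial_eq_0\<close>)
      also have "\<dots> = 1" by (rule alt_sum[OF s1 n2])
      finally show ?thesis unfolding lhs rhs n_def by simp
    qed
  qed
qed

lemma gen:
  fixes d a b c t :: nat
  assumes t: "t \<in> {1,2}" and dl: "a + b + c > d" and w: "w \<in> words d"
    and DD: "DD = rho d (matunit t (3 - t))" and HH: "HH = rho d (matunit t t)"
    and UU: "UU = rho d (matunit (3 - t) t)"
  defines "s \<equiv> a + b + c - d"
  shows "(divpow DD a \<circ> binop HH b \<circ> divpow UU c) phi w
         = (\<Sum>k\<in>{s..min a c}. (-1) ^ (k - s) * of_nat ((k - 1) choose (s - 1))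
              * of_nat ((b + k) choose k)
              * (divpow DD (a - k) \<circ> binop HH (b + k) \<circ> divpow UU (c - k)) phi w)"
proof -
  define X where "X = {i. i < d \<and> w ! i = t}"
  have wX: "w = Wg d t X" unfolding X_def by (rule words_Wg[OF t w])
  have X: "X \<subseteq> {..<d}" unfolding X_def by auto
  have G: "Gc d a b c X Y = (\<Sum>k\<in>{s..min a c}. (-1) ^ (k - s) * of_nat ((k - 1) choose (s - 1))
              * of_nat ((b + k) choose k) * Gc d (a - k) (b + k) (c - k) X Y)"
    if Y: "Y \<subseteq> {..<d}" for Y
  proof -
    have fX: "finite X" by (rule finite_subset[OF X]) simp
    have fY: "finite Y" by (rule finite_subset[OF Y]) simp
    have r1: "card (X \<inter> Y) \<le> card X" using fX by (intro card_mono) auto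
    have r2: "card (X \<inter> Y) \<le> card Y" using fY by (intro card_mono) auto
    have "card (X \<union> Y) \<le> card {..<d}" using X Y by (intro card_mono) auto
    then have un: "card X + card Y \<le> d + card (X \<inter> Y)"
      using card_Un_Int[OF fX fY] by simp
    show ?thesis
      unfolding Gc_formula[OF X Y] s_def by (rule scalar[OF r1 r2 un dl])
  qed
  have "(divpow DD a \<circ> binop HH b \<circ> divpow UU c) phi w = (\<Sum>Y\<in>Pow {..<d}. Gc d a b c X Y * phi (Wg d t Y))"
    unfolding wX DD HH UU by (rule comp_Wg[OF t X])
  also have "\<dots> = (\<Sum>Y\<in>Pow {..<d}. (\<Sum>k\<in>{s..min a c}. (-1) ^ (k - s) * of_nat ((k - 1) choose (s - 1))
              * of_nat ((b + k) choose k) * Gc d (a - k) (b + k) (c - k) X Y) * phi (Wg d t Y))"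
    by (intro sum.cong refl) (simp add: G)
  also have "\<dots> = (\<Sum>k\<in>{s..min a c}. (-1) ^ (k - s) * of_nat ((k - 1) choose (s - 1))
              * of_nat ((b + k) choose k) * (\<Sum>Y\<in>Pow {..<d}. Gc d (a - k) (b + k) (c - k) X Y * phi (Wg d t Y)))"
    by (simp only: sum_distrib_left sum_distrib_right mult_ac sum.swap[of _ "{s..min a c}"])
  also have "\<dots> = (\<Sum>k\<in>{s..min a c}. (-1) ^ (k - s) * of_nat ((k - 1) choose (s - 1))
              * of_nat ((b + k) choose k)
              * (divpow DD (a - k) \<circ> binop HH (b + k) \<circ> divpow UU (c - k)) phi w)"
    unfolding wX DD HH UU by (simp only: comp_Wg[OF t X])
  finally show ?thesis .
qed

theorem theorem2p5:
  fixes d a b c :: nat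
  assumes "a + b + c > d"
  defines "s \<equiv> a + b + c - d"
  shows "(\<forall>phi. \<forall>w\<in>words d.
           (divpow (f_op d) a \<circ> binop (H2_op d) b \<circ> divpow (e_op d) c) phi w
         = (\<Sum>k\<in>{s..min a c}. (-1) ^ (k - s) * of_nat ((k - 1) choose (s - 1))
              * of_nat ((b + k) choose k)
              * (divpow (f_op d) (a - k) \<circ> binop (H2_op d) (b + k) \<circ> divpow (e_op d) (c - k)) phi w))
       \<and> (\<forall>phi. \<forall>w\<in>words d.
           (divpow (e_op d) a \<circ> binop (H1_op d) b \<circ> divpow (f_op d) c) phi w
         = (\<Sum>k\<in>{s..min a c}. (-1) ^ (k - s) * of_nat ((k - 1) choose (s - 1))
              * of_nat ((b + k) choose k)
              * (divpow (e_op d) (a - k) \<circ> binop (H1_op d) (b + k) \<circ> divpow (f_op d) (c - k)) phi w))"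
proof (intro conjI allI ballI)
  fix phi w assume w: "w \<in> words d"
  have f2: "f_op d = rho d (matunit 2 (3 - 2))" "H2_op d = rho d (matunit 2 2)" "e_op d = rho d (matunit (3 - 2) 2)"
    by (simp_all add: f_op_def H2_op_def e_op_def)
  show "(divpow (f_op d) a \<circ> binop (H2_op d) b \<circ> divpow (e_op d) c) phi w
         = (\<Sum>k\<in>{s..min a c}. (-1) ^ (k - s) * of_nat ((k - 1) choose (s - 1))
              * of_nat ((b + k) choose k)
              * (divpow (f_op d) (a - k) \<circ> binop (H2_op d) (b + k) \<circ> divpow (e_op d) (c - k)) phi w)"
    unfolding s_def by (rule gen[OF _ assms(1) w f2]) simp
next
  fix phi w assume w: "w \<in> words d"
  have f1: "e_op d = rho d (matunit 1 (3 - 1))" "H1_op d = rho d (matunit 1 1)" "f_op d = rho d (matunit (3 - 1) 1)"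
    by (simp_all add: f_op_def H1_op_def e_op_def)
  show "(divpow (e_op d) a \<circ> binop (H1_op d) b \<circ> divpow (f_op d) c) phi w
         = (\<Sum>k\<in>{s..min a c}. (-1) ^ (k - s) * of_nat ((k - 1) choose (s - 1))
              * of_nat ((b + k) choose k)
              * (divpow (e_op d) (a - k) \<circ> binop (H1_op d) (b + k) \<circ> divpow (f_op d) (c - k)) phi w)"
    unfolding s_def by (rule gen[OF _ assms(1) w f1]) simp
qed

end
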